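(* Let $\Gamma=M\mathbb{Z}^n$ be a lattice in $\mathbb{R}^n$ (or $\mathbb{C}^n$), $M$ invertible, and let $A$ be a dilation matrix for $\Gamma$. Then there exists an integer $\beta\ge1$ such that $A^\beta$ yields a radix representation of $\Gamma$ with digit set $D_\beta=A^\beta(F_\Gamma)\cap\Gamma$, where $F_\Gamma=M([-\tfrac12,\tfrac12)^n)$; i.e. every $x\in\Gamma$ equals $\sum_{j=0}^N A^{\beta j}d_j$ for some $N\ge0$ and $d_j\in D_\beta$.
   Context: An integer dilation matrix is an $n\times n$ matrix with integer entries all of whose eigenvalues $\lambda$ satisfy $|\lambda|>1$. A matrix $A$ is a dilation matrix for $\Gamma=M\mathbb{Z}^n$ if $M^{-1}AM$ is an integer dilation matrix. *)

theory Defs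
  imports Complex_Main "Jordan_Normal_Form.Char_Poly"
begin

definition int_dilation_matrix :: "nat \<Rightarrow> int mat \<Rightarrow> bool" where
  "int_dilation_matrix n B \<longleftrightarrow> B \<in> carrier_mat n n \<and>
     (\<forall>k. eigenvalue (map_mat complex_of_int B) k \<longrightarrow> cmod k > 1)"

definition dilation_matrix_for :: "nat \<Rightarrow> 'a::field mat \<Rightarrow> 'a mat \<Rightarrow> bool" where
  "dilation_matrix_for n M A \<longleftrightarrow> M \<in> carrier_mat n n \<and> A \<in> carrier_mat n n \<and>
     (\<exists>Minv B. Minv \<in> carrier_mat n n \<and> Minv * M = 1\<^sub>m n \<and> M * Minv = 1\<^sub>m n \<and>
        int_dilation_matrix n B \<and> Minv * A * M = map_mat of_int B)"

definition lattice :: "nat \<Rightarrow> 'a::field mat \<Rightarrow> 'a vec set" where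
  "lattice n M = {M *\<^sub>v z | z. z \<in> carrier_vec n \<and> (\<forall>i<n. z $ i \<in> \<int>)}"

definition fund_dom :: "nat \<Rightarrow> 'a::real_field mat \<Rightarrow> 'a vec set" where
  "fund_dom n M = {M *\<^sub>v vec n (\<lambda>i. of_real (y i)) | y. \<forall>i<n. -1/2 \<le> y i \<and> y i < 1/2}"

definition digit_set :: "nat \<Rightarrow> 'a::real_field mat \<Rightarrow> 'a mat \<Rightarrow> nat \<Rightarrow> 'a vec set" where
  "digit_set n M A \<beta> = ((\<lambda>f. (A ^\<^sub>m \<beta>) *\<^sub>v f) ` fund_dom n M) \<inter> lattice n M"

end

theory Submission
  imports Defs "Jordan_Normal_Form.Spectral_Radius" "Jordan_Normal_Form.Determinant"
begin

interpretation of_real_hom: semiring_hom "of_real :: real \<Rightarrow> 'a::real_algebra_1"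
  by (unfold_locales, auto)




lemma inv_real:
  fixes B :: "int mat"
  assumes "int_dilation_matrix n B"
  shows "\<exists>Cr. Cr \<in> carrier_mat n n \<and> map_mat real_of_int B * Cr = 1\<^sub>m n \<and> Cr * map_mat real_of_int B = 1\<^sub>m n"
proof -
  let ?Bc = "map_mat complex_of_int B"
  let ?Br = "map_mat real_of_int B"
  have B: "B \<in> carrier_mat n n" and ev: "\<And>k. eigenvalue ?Bc k \<Longrightarrow> cmod k > 1"
    using assms unfolding int_dilation_matrix_def by auto
  have Bc: "?Bc \<in> carrier_mat n n" using B by auto
  have "det ?Bc \<noteq> 0"
  proof
    assume "det ?Bc = 0"
    then obtain v where v: "v \<in> carrier_vec n" "v \<noteq> 0\<^sub>v n" "?Bc *\<^sub>v v = 0\<^sub>v n"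
      using det_0_iff_vec_prod_zero[OF Bc] by auto
    have "eigenvalue ?Bc 0" unfolding eigenvalue_def eigenvector_def
      using v B by (intro exI[of _ v]) auto
    from ev[OF this] show False by simp
  qed
  hence "det B \<noteq> 0" by simp
  hence d: "det ?Br \<noteq> 0" by simp
  have Br: "?Br \<in> carrier_mat n n" using B by auto
  define Cr where "Cr = (1 / det ?Br) \<cdot>\<^sub>m adj_mat ?Br"
  have A: "adj_mat ?Br \<in> carrier_mat n n" using adj_mat[OF Br] by auto
  show ?thesis
  proof (intro exI[of _ Cr] conjI)
    show "Cr \<in> carrier_mat n n" unfolding Cr_def using A by auto
    show "?Br * Cr = 1\<^sub>m n" unfolding Cr_def using adj_mat[OF Br] d Br A
      by (simp add: mult_smult_distrib, intro eq_matI, auto)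
    show "Cr * ?Br = 1\<^sub>m n" unfolding Cr_def using adj_mat[OF Br] d Br A
      by (simp add: mult_smult_assoc_mat, intro eq_matI, auto)
  qed
qed





lemma pow_smult_mat: assumes "(A :: 'a :: comm_ring_1 mat) \<in> carrier_mat n n"
  shows "(c \<cdot>\<^sub>m A) ^\<^sub>m k = (c ^ k) \<cdot>\<^sub>m (A ^\<^sub>m k)"
proof (induct k)
  case 0 then show ?case using assms by (auto intro!: eq_matI)
next
  case (Suc k)
  have "(c \<cdot>\<^sub>m A) ^\<^sub>m Suc k = ((c ^ k) \<cdot>\<^sub>m (A ^\<^sub>m k)) * (c \<cdot>\<^sub>m A)" using Suc by simp
  also have "\<dots> = (c ^ Suc k) \<cdot>\<^sub>m (A ^\<^sub>m Suc k)"
    using assms by (simp add: mult_smult_assoc_mat mult_smult_distrib, intro eq_matI, auto)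
  finally show ?case .
qed

lemma decay:
  fixes B :: "int mat" and Cr :: "real mat"
  assumes dil: "int_dilation_matrix n B" and Cr: "Cr \<in> carrier_mat n n"
    and BC: "map_mat real_of_int B * Cr = 1\<^sub>m n" and CB: "Cr * map_mat real_of_int B = 1\<^sub>m n"
    and n: "n > 0" and eps: "\<epsilon> > 0"
  shows "\<exists>\<beta>\<ge>1. \<forall>i j. i < n \<longrightarrow> j < n \<longrightarrow> \<bar>(Cr ^\<^sub>m \<beta>) $$ (i,j)\<bar> \<le> \<epsilon>"
proof -
  let ?Br = "map_mat real_of_int B"
  let ?Bc = "map_mat complex_of_int B"
  let ?Cc = "map_mat complex_of_real Cr"
  have B: "B \<in> carrier_mat n n" and ev: "\<And>k. eigenvalue ?Bc k \<Longrightarrow> cmod k > 1"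
    using dil unfolding int_dilation_matrix_def by auto
  have Br: "?Br \<in> carrier_mat n n" using B by auto
  have Bc_eq: "?Bc = map_mat complex_of_real ?Br" using B by (intro eq_matI) auto
  have Cc: "?Cc \<in> carrier_mat n n" using Cr by auto
  have Bc: "?Bc \<in> carrier_mat n n" using B by auto
  have BCc: "?Bc * ?Cc = 1\<^sub>m n" unfolding Bc_eq
    using of_real_hom.mat_hom_mult[OF Br Cr] BC of_real_hom.mat_hom_one by metis
  have evC: "cmod \<mu> < 1" if "eigenvalue ?Cc \<mu>" for \<mu>
  proof -
    from that obtain v where v: "v \<in> carrier_vec n" "v \<noteq> 0\<^sub>v n" "?Cc *\<^sub>v v = \<mu> \<cdot>\<^sub>v v"
      unfolding eigenvalue_def eigenvector_def using Cr by auto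
    have "v = ?Bc *\<^sub>v (?Cc *\<^sub>v v)" using BCc v Bc Cc
      by (metis assoc_mult_mat_vec one_mult_mat_vec)
    also have "\<dots> = \<mu> \<cdot>\<^sub>v (?Bc *\<^sub>v v)" using v Bc by (simp add: mult_mat_vec)
    finally have vv: "v = \<mu> \<cdot>\<^sub>v (?Bc *\<^sub>v v)" .
    have mu0: "\<mu> \<noteq> 0"
    proof
      assume "\<mu> = 0"
      hence "v = 0 \<cdot>\<^sub>v (?Bc *\<^sub>v v)" using vv by simp
      also have "\<dots> = 0\<^sub>v n" using Bc v by (intro eq_vecI) auto
      finally have "v = 0\<^sub>v n" .
      thus False using v by simp
    qed
    have "?Bc *\<^sub>v v = (1/\<mu>) \<cdot>\<^sub>v v"
    proof -
      have "(1/\<mu>) \<cdot>\<^sub>v v = (1/\<mu>) \<cdot>\<^sub>v (\<mu> \<cdot>\<^sub>v (?Bc *\<^sub>v v))" using vv by simp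
      also have "\<dots> = ?Bc *\<^sub>v v" using mu0 by (simp add: smult_smult_assoc)
      finally show ?thesis by simp
    qed
    hence "eigenvalue ?Bc (1/\<mu>)" unfolding eigenvalue_def eigenvector_def
      using v B by (intro exI[of _ v]) auto
    from ev[OF this] mu0 show ?thesis by (simp add: norm_divide divide_simps)
  qed
  define \<rho> where "\<rho> = spectral_radius ?Cc"
  from spectral_radius_mem_max[OF Cc n] have rho_mem: "\<rho> \<in> norm ` spectrum ?Cc"
    and rho_max: "\<And>a. a \<in> norm ` spectrum ?Cc \<Longrightarrow> a \<le> \<rho>" unfolding \<rho>_def by auto
  from rho_mem have rho1: "\<rho> < 1" "\<rho> \<ge> 0" using evC unfolding spectrum_def by auto
  define c where "c = 2 / (1 + \<rho>)"
  have c1: "c > 1" "c * \<rho> < 1" using rho1 unfolding c_def by (auto simp: field_simps)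
  define D where "D = complex_of_real c \<cdot>\<^sub>m ?Cc"
  have D: "D \<in> carrier_mat n n" unfolding D_def using Cc by auto
  have evD: "cmod l \<le> c * \<rho>" if "eigenvalue D l" for l
  proof -
    from that obtain v where v: "v \<in> carrier_vec n" "v \<noteq> 0\<^sub>v n" "D *\<^sub>v v = l \<cdot>\<^sub>v v"
      unfolding eigenvalue_def eigenvector_def using D by auto
    have "?Cc *\<^sub>v v = (l / c) \<cdot>\<^sub>v v"
    proof -
      have "D *\<^sub>v v = complex_of_real c \<cdot>\<^sub>v (?Cc *\<^sub>v v)" unfolding D_def
        using v Cc by (intro eq_vecI) (auto simp: scalar_prod_def sum_distrib_left ac_simps)
      hence "(1 / complex_of_real c) \<cdot>\<^sub>v (l \<cdot>\<^sub>v v) = ?Cc *\<^sub>v v" using v(3) c1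
        by (simp add: smult_smult_assoc)
      thus ?thesis by (simp add: smult_smult_assoc)
    qed
    hence "eigenvalue ?Cc (l / c)" unfolding eigenvalue_def eigenvector_def
      using v Cr by (intro exI[of _ v]) auto
    hence "cmod (l / c) \<le> \<rho>" using rho_max unfolding spectrum_def by auto
    thus ?thesis using c1 by (simp add: norm_divide field_simps)
  qed
  have "spectral_radius D \<in> norm ` spectrum D" using spectral_radius_mem_max(1)[OF D n] .
  hence "spectral_radius D < 1" using evD c1 unfolding spectrum_def by force
  from spectral_radius_jnf_norm_bound_less_1_upper_triangular[OF D this]
  obtain K where K: "\<And>k. norm_bound (D ^\<^sub>m k) K" by auto
  have bnd: "c ^ k * \<bar>(Cr ^\<^sub>m k) $$ (i,j)\<bar> \<le> K" if "i < n" "j < n" for i j k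
  proof -
    have "D ^\<^sub>m k = complex_of_real (c ^ k) \<cdot>\<^sub>m (?Cc ^\<^sub>m k)"
      unfolding D_def pow_smult_mat[OF Cc] by simp
    also have "?Cc ^\<^sub>m k = map_mat complex_of_real (Cr ^\<^sub>m k)"
      by (rule of_real_hom.mat_hom_pow[OF Cr, symmetric])
    finally have "(D ^\<^sub>m k) $$ (i,j) = complex_of_real (c ^ k * (Cr ^\<^sub>m k) $$ (i,j))"
      using that Cr by simp
    moreover have "norm ((D ^\<^sub>m k) $$ (i,j)) \<le> K" using K[of k] that D
      unfolding norm_bound_def by auto
    ultimately have h: "norm (complex_of_real (c ^ k * (Cr ^\<^sub>m k) $$ (i,j))) \<le> K" by (simp only:)
    have "norm (complex_of_real (c ^ k * (Cr ^\<^sub>m k) $$ (i,j))) = \<bar>c ^ k\<bar> * \<bar>(Cr ^\<^sub>m k) $$ (i,j)\<bar>"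
      by (simp only: norm_of_real abs_mult)
    also have "\<bar>c ^ k\<bar> = c ^ k" using c1 by simp
    finally show ?thesis using h by simp
  qed
  obtain k where k: "K / \<epsilon> < c ^ k" using real_arch_pow[OF c1(1)] by blast
  have "c ^ k \<le> c ^ Suc k" using c1 by simp
  show ?thesis
  proof (intro exI[of _ "Suc k"] conjI allI impI)
    fix i j assume ij: "i < n" "j < n"
    have cpos: "c ^ Suc k > 0" using c1 by simp
    have "c ^ Suc k * \<bar>(Cr ^\<^sub>m Suc k) $$ (i,j)\<bar> \<le> K" using bnd ij .
    moreover have "K \<le> \<epsilon> * c ^ Suc k"
    proof -
      have "K < \<epsilon> * c ^ k" using k eps by (simp add: field_simps)
      also have "\<dots> \<le> \<epsilon> * c ^ Suc k" using \<open>c ^ k \<le> c ^ Suc k\<close> eps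
        by (intro mult_left_mono) auto
      finally show ?thesis by simp
    qed
    ultimately have "c ^ Suc k * \<bar>(Cr ^\<^sub>m Suc k) $$ (i,j)\<bar> \<le> c ^ Suc k * \<epsilon>" by (simp add: ac_simps)
    thus "\<bar>(Cr ^\<^sub>m Suc k) $$ (i,j)\<bar> \<le> \<epsilon>" by (subst (asm) mult_le_cancel_left_pos[OF cpos])
  qed simp
qed





lemma pow_mat_add: assumes "A \<in> carrier_mat n n"
  shows "A ^\<^sub>m (k + l) = A ^\<^sub>m k * A ^\<^sub>m l"
proof (induct l)
  case 0 then show ?case using assms by simp
next
  case (Suc l)
  have "A ^\<^sub>m (k + Suc l) = (A ^\<^sub>m k * A ^\<^sub>m l) * A" using Suc by simp
  also have "\<dots> = A ^\<^sub>m k * (A ^\<^sub>m l * A)" using assms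
    by (intro assoc_mult_mat) auto
  finally show ?case by simp
qed

lemma pow_inverse_mat: assumes "A \<in> carrier_mat n n" "C \<in> carrier_mat n n"
  "A * C = 1\<^sub>m n" "C * A = 1\<^sub>m n"
  shows "A ^\<^sub>m k * C ^\<^sub>m k = 1\<^sub>m n"
proof (induct k)
  case 0 then show ?case using assms by simp
next
  case (Suc k)
  have "C ^\<^sub>m Suc k = C ^\<^sub>m (1 + k)" by simp
  also have "\<dots> = C * C ^\<^sub>m k" using pow_mat_add[OF assms(2), of 1 k] assms(2) by simp
  finally have e: "C ^\<^sub>m Suc k = C * C ^\<^sub>m k" .
  have "A ^\<^sub>m Suc k * C ^\<^sub>m Suc k = (A ^\<^sub>m k * A) * (C * C ^\<^sub>m k)" using e by simp
  also have "\<dots> = A ^\<^sub>m k * (A * (C * C ^\<^sub>m k))" using assms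
    by (intro assoc_mult_mat[of _ n n _ n _ n]) auto
  also have "A * (C * C ^\<^sub>m k) = (A * C) * C ^\<^sub>m k" using assms
    by (intro assoc_mult_mat[of _ n n _ n _ n, symmetric]) auto
  finally show ?case using Suc assms by simp
qed

lemma mult_mat_vec_sum: assumes A: "A \<in> carrier_mat n n" and v: "\<And>j. j \<in> S \<Longrightarrow> v j \<in> carrier_vec n"
  shows "A *\<^sub>v vec n (\<lambda>i. \<Sum>j\<in>S. v j $ i) = vec n (\<lambda>i. \<Sum>j\<in>S. (A *\<^sub>v v j) $ i)"
proof (rule eq_vecI)
  fix i assume i: "i < dim_vec (vec n (\<lambda>i. \<Sum>j\<in>S. (A *\<^sub>v v j) $ i))"
  hence i: "i < n" by simp
  have dv[simp]: "dim_vec (v j) = n" if "j \<in> S" for j using v[OF that] by auto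
  have "(A *\<^sub>v vec n (\<lambda>i. \<Sum>j\<in>S. v j $ i)) $ i = (\<Sum>k<n. A $$ (i,k) * (\<Sum>j\<in>S. v j $ k))"
    using A i by (simp add: scalar_prod_def lessThan_atLeast0)
  also have "\<dots> = (\<Sum>j\<in>S. \<Sum>k<n. A $$ (i,k) * v j $ k)"
    by (simp add: sum_distrib_left sum.swap[of _ S])
  also have "\<dots> = (\<Sum>j\<in>S. (A *\<^sub>v v j) $ i)"
    using A i v by (intro sum.cong refl) (auto simp: scalar_prod_def lessThan_atLeast0)
  finally show "(A *\<^sub>v vec n (\<lambda>i. \<Sum>j\<in>S. v j $ i)) $ i = vec n (\<lambda>i. \<Sum>j\<in>S. (A *\<^sub>v v j) $ i) $ i"
    using i by simp
qed (use A in simp)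

definition rep :: "nat \<Rightarrow> 'a::real_normed_field mat \<Rightarrow> 'a mat \<Rightarrow> nat \<Rightarrow> 'a vec \<Rightarrow> bool" where
  "rep n M A \<beta> x \<longleftrightarrow> (\<exists>N::nat. \<exists>d :: nat \<Rightarrow> 'a vec.
       (\<forall>j\<le>N. d j \<in> digit_set n M A \<beta>) \<and>
       x = vec n (\<lambda>i. \<Sum>j\<le>N. ((A ^\<^sub>m (\<beta> * j)) *\<^sub>v d j) $ i))"

lemma digit_carrier: assumes "M \<in> carrier_mat n n" "d \<in> digit_set n M A \<beta>"
  shows "d \<in> carrier_vec n"
  using assms unfolding digit_set_def lattice_def by auto

lemma zero_digit: assumes M: "M \<in> carrier_mat n n" and A: "A \<in> carrier_mat n n"
  shows "0\<^sub>v n \<in> digit_set n M (A :: 'a::real_normed_field mat) \<beta>"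
proof -
  have v0: "vec n (\<lambda>i. of_real ((\<lambda>_. 0) i)) = (0\<^sub>v n :: 'a vec)" by auto
  have f: "0\<^sub>v n \<in> fund_dom n M" unfolding fund_dom_def
    by (rule CollectI, rule exI[of _ "\<lambda>_. 0"]) (use M v0 in auto)
  have "0\<^sub>v n = A ^\<^sub>m \<beta> *\<^sub>v 0\<^sub>v n" using A by (intro eq_vecI) (auto simp: scalar_prod_def)
  hence i: "0\<^sub>v n \<in> (\<lambda>f. (A ^\<^sub>m \<beta>) *\<^sub>v f) ` fund_dom n M" using f by blast
  have "0\<^sub>v n \<in> lattice n M" unfolding lattice_def
    by (rule CollectI, rule exI[of _ "0\<^sub>v n"]) (use M in auto)
  with i show ?thesis unfolding digit_set_def by auto
qed

lemma rep_zero: assumes M: "M \<in> carrier_mat n n" and A: "A \<in> carrier_mat n n"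
  shows "rep n M A \<beta> (0\<^sub>v n)"
  unfolding rep_def
  by (rule exI[of _ 0], rule exI[of _ "\<lambda>_. 0\<^sub>v n"]) (use zero_digit[OF M A] A in auto)

lemma rep_step: assumes M: "M \<in> carrier_mat n n" and A: "A \<in> carrier_mat n n"
  and r: "rep n M A \<beta> x" and d0: "d0 \<in> digit_set n M A \<beta>"
  shows "rep n M A \<beta> (d0 + A ^\<^sub>m \<beta> *\<^sub>v x)"
proof -
  from r obtain N d where d: "\<And>j. j \<le> N \<Longrightarrow> d j \<in> digit_set n M A \<beta>"
    and x: "x = vec n (\<lambda>i. \<Sum>j\<le>N. ((A ^\<^sub>m (\<beta> * j)) *\<^sub>v d j) $ i)"
    unfolding rep_def by auto
  define d' where "d' = (\<lambda>j. case j of 0 \<Rightarrow> d0 | Suc j \<Rightarrow> d j)"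
  have dc: "\<And>j. j \<le> N \<Longrightarrow> d j \<in> carrier_vec n" using d digit_carrier[OF M] by blast
  have d0c: "d0 \<in> carrier_vec n" using d0 digit_carrier[OF M] by blast
  have "A ^\<^sub>m \<beta> *\<^sub>v x = vec n (\<lambda>i. \<Sum>j\<le>N. (A ^\<^sub>m \<beta> *\<^sub>v ((A ^\<^sub>m (\<beta> * j)) *\<^sub>v d j)) $ i)"
    unfolding x using A dc by (intro mult_mat_vec_sum) (auto intro!: mult_mat_vec_carrier[of _ n n])
  also have "\<dots> = vec n (\<lambda>i. \<Sum>j\<le>N. ((A ^\<^sub>m (\<beta> * Suc j)) *\<^sub>v d j) $ i)"
  proof -
    have "A ^\<^sub>m \<beta> *\<^sub>v ((A ^\<^sub>m (\<beta> * j)) *\<^sub>v d j) = (A ^\<^sub>m (\<beta> * Suc j)) *\<^sub>v d j" if "j \<le> N" for j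
    proof -
      have e: "A ^\<^sub>m (\<beta> * Suc j) = A ^\<^sub>m \<beta> * A ^\<^sub>m (\<beta> * j)" using pow_mat_add[OF A, of \<beta> "\<beta> * j"] by simp
      show ?thesis unfolding e by (rule assoc_mult_mat_vec[symmetric]) (use A dc[OF that] in auto)
    qed
    thus ?thesis by (intro eq_vecI) auto
  qed
  finally have ax: "A ^\<^sub>m \<beta> *\<^sub>v x = vec n (\<lambda>i. \<Sum>j\<le>N. ((A ^\<^sub>m (\<beta> * Suc j)) *\<^sub>v d j) $ i)" .
  show ?thesis unfolding rep_def
  proof (intro exI[of _ "Suc N"] exI[of _ d'] conjI allI impI)
    fix j assume "j \<le> Suc N" thus "d' j \<in> digit_set n M A \<beta>"
      using d d0 unfolding d'_def by (cases j) auto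
  next
    show "d0 + A ^\<^sub>m \<beta> *\<^sub>v x = vec n (\<lambda>i. \<Sum>j\<le>Suc N. ((A ^\<^sub>m (\<beta> * j)) *\<^sub>v d' j) $ i)"
      unfolding ax
    proof (rule eq_vecI)
      fix i assume "i < dim_vec (vec n (\<lambda>i. \<Sum>j\<le>Suc N. ((A ^\<^sub>m (\<beta> * j)) *\<^sub>v d' j) $ i))"
      hence i: "i < n" by simp
      have "(\<Sum>j\<le>Suc N. ((A ^\<^sub>m (\<beta> * j)) *\<^sub>v d' j) $ i) =
         ((A ^\<^sub>m (\<beta> * 0)) *\<^sub>v d' 0) $ i + (\<Sum>j\<le>N. ((A ^\<^sub>m (\<beta> * Suc j)) *\<^sub>v d' (Suc j)) $ i)"
        by (rule sum.atMost_Suc_shift)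
      also have "\<dots> = d0 $ i + (\<Sum>j\<le>N. ((A ^\<^sub>m (\<beta> * Suc j)) *\<^sub>v d j) $ i)"
        using i d0c A by (simp add: d'_def)
      finally show "(d0 + vec n (\<lambda>i. \<Sum>j\<le>N. ((A ^\<^sub>m (\<beta> * Suc j)) *\<^sub>v d j) $ i)) $ i =
         vec n (\<lambda>i. \<Sum>j\<le>Suc N. ((A ^\<^sub>m (\<beta> * j)) *\<^sub>v d' j) $ i) $ i"
        using i d0c by simp
    qed (use d0c in simp)
  qed
qed

lemma A_pow_M: assumes M: "M \<in> carrier_mat n n" and Minv: "Minv \<in> carrier_mat n n"
  and A: "A \<in> carrier_mat n n" and MM: "M * Minv = 1\<^sub>m n"
  and AB: "Minv * A * M = B'" 
  shows "A ^\<^sub>m k * M = M * B' ^\<^sub>m k"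
proof -
  have B': "B' \<in> carrier_mat n n" using AB M Minv A by auto
  have AM: "A * M = M * B'"
  proof -
    have "M * B' = (M * Minv) * (A * M)" unfolding AB[symmetric] using M Minv A
      by (simp add: assoc_mult_mat[of _ n n _ n _ n])
    thus ?thesis using MM A M by simp
  qed
  show ?thesis
  proof (induct k)
    case 0 then show ?case using M A B' by simp
  next
    case (Suc k)
    have "A ^\<^sub>m Suc k * M = A ^\<^sub>m k * (A * M)" using A M by (simp add: assoc_mult_mat[of _ n n _ n _ n])
    also have "\<dots> = (A ^\<^sub>m k * M) * B'" unfolding AM using A M B' by (simp add: assoc_mult_mat[of _ n n _ n _ n])
    also have "\<dots> = M * B' ^\<^sub>m Suc k" unfolding Suc using M B' by (simp add: assoc_mult_mat[of _ n n _ n _ n])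
    finally show ?case .
  qed
qed



lemma core:
  fixes M A Minv :: "'a::real_normed_field mat" and B :: "int mat" and P :: "real mat"
  assumes M: "M \<in> carrier_mat n n" and Minv: "Minv \<in> carrier_mat n n"
    and A: "A \<in> carrier_mat n n" and MM: "M * Minv = 1\<^sub>m n"
    and AB: "Minv * A * M = map_mat of_int B"
    and B: "B \<in> carrier_mat n n" and P: "P \<in> carrier_mat n n"
    and BP: "map_mat real_of_int (B ^\<^sub>m \<beta>) * P = 1\<^sub>m n"
    and small: "\<And>i j. i < n \<Longrightarrow> j < n \<Longrightarrow> \<bar>P $$ (i,j)\<bar> \<le> 1 / (4 * real n)"
  shows "z \<in> carrier_vec n \<Longrightarrow> (\<forall>i<n. \<bar>z $ i\<bar> \<le> int m) \<Longrightarrow> rep n M A \<beta> (M *\<^sub>v map_vec of_int z)"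
proof (induct m arbitrary: z)
  case 0
  hence "z = 0\<^sub>v n" by (intro eq_vecI) auto
  hence "M *\<^sub>v map_vec of_int z = 0\<^sub>v n" using M by (intro eq_vecI) (auto simp: scalar_prod_def)
  thus ?case using rep_zero[OF M A] by simp
next
  case (Suc m z)
  note z = Suc(2) and zb = Suc(3)
  let ?B' = "map_mat (of_int :: int \<Rightarrow> 'a) B"
  define Bi where "Bi = B ^\<^sub>m \<beta>"
  define Bb where "Bb = map_mat real_of_int Bi"
  define zr where "zr = map_vec real_of_int z"
  define y where "y = P *\<^sub>v zr"
  define q where "q = vec n (\<lambda>i. \<lfloor>y $ i + 1/2\<rfloor>)"
  define e where "e = z - Bi *\<^sub>v q"
  define r where "r = y - map_vec real_of_int q"
  have Bi: "Bi \<in> carrier_mat n n" unfolding Bi_def using B by simp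
  have Bb: "Bb \<in> carrier_mat n n" unfolding Bb_def using Bi by simp
  have zr: "zr \<in> carrier_vec n" unfolding zr_def using z by simp
  have y: "y \<in> carrier_vec n" unfolding y_def using P zr by simp
  have q: "q \<in> carrier_vec n" unfolding q_def by simp
  have e: "e \<in> carrier_vec n" unfolding e_def using z Bi q by simp
  have r: "r \<in> carrier_vec n" unfolding r_def using y q by simp
  have BbP: "Bb * P = 1\<^sub>m n" using BP unfolding Bb_def Bi_def .
  have ya: "\<bar>y $ i\<bar> \<le> (real m + 1) / 4" if i: "i < n" for i
  proof -
    have "y $ i = (\<Sum>k<n. P $$ (i,k) * zr $ k)"
      unfolding y_def using P zr i by (simp add: scalar_prod_def lessThan_atLeast0)
    hence "\<bar>y $ i\<bar> \<le> (\<Sum>k<n. \<bar>P $$ (i,k) * zr $ k\<bar>)" by (simp add: sum_abs)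
    also have "\<dots> \<le> (\<Sum>k<n. (1 / (4 * real n)) * (real m + 1))"
    proof (rule sum_mono)
      fix k assume k: "k \<in> {..<n}"
      have "\<bar>zr $ k\<bar> \<le> real m + 1" using zb k z unfolding zr_def by force
      moreover have "\<bar>P $$ (i,k)\<bar> \<le> 1 / (4 * real n)" using small i k by auto
      ultimately have "\<bar>P $$ (i,k)\<bar> * \<bar>zr $ k\<bar> \<le> (1 / (4 * real n)) * (real m + 1)"
        by (intro mult_mono) auto
      thus "\<bar>P $$ (i,k) * zr $ k\<bar> \<le> (1 / (4 * real n)) * (real m + 1)"
        by (simp only: abs_mult)
    qed
    also have "\<dots> = (real m + 1) / 4" using i by simp
    finally show ?thesis .
  qed
  have qb: "\<forall>i<n. \<bar>q $ i\<bar> \<le> int m"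
  proof (intro allI impI)
    fix i assume i: "i < n"
    have fl: "real_of_int (q $ i) \<le> y $ i + 1/2" "y $ i + 1/2 < real_of_int (q $ i) + 1"
      unfolding q_def using i by (auto simp: of_int_floor_le)
    have "real_of_int (q $ i) < real m + 1" "real_of_int (q $ i) > - real m - 1"
      using fl ya[OF i] by (auto simp: abs_le_iff)
    hence "q $ i < int m + 1" "q $ i > - int m - 1" by linarith+
    thus "\<bar>q $ i\<bar> \<le> int m" by auto
  qed
  from Suc(1)[OF q qb] have IH: "rep n M A \<beta> (M *\<^sub>v map_vec of_int q)" .
  have hm: "map_vec real_of_int (Bi *\<^sub>v q) = Bb *\<^sub>v map_vec real_of_int q"
    unfolding Bb_def by (rule of_int_hom.mult_mat_vec_hom[OF Bi q])
  have ec: "map_vec real_of_int e = Bb *\<^sub>v r"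
  proof -
    have "map_vec real_of_int e = zr - Bb *\<^sub>v map_vec real_of_int q"
      unfolding e_def zr_def hm[symmetric] using z Bi q by (intro eq_vecI) auto
    also have "zr = Bb *\<^sub>v y" unfolding y_def using Bb P zr BbP
      by (simp add: assoc_mult_mat_vec[symmetric, of Bb n n P n zr])
    also have "Bb *\<^sub>v y - Bb *\<^sub>v map_vec real_of_int q = Bb *\<^sub>v r"
      unfolding r_def using Bb y q by (simp add: mult_minus_distrib_mat_vec)
    finally show ?thesis .
  qed
  have B'pow: "?B' ^\<^sub>m \<beta> = map_mat of_int Bi"
    unfolding Bi_def by (rule of_int_hom.mat_hom_pow[OF B, symmetric])
  have B'pow2: "?B' ^\<^sub>m \<beta> = map_mat of_real Bb"
    unfolding B'pow Bb_def using Bi by (intro eq_matI) auto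
  have B': "?B' \<in> carrier_mat n n" using B by simp
  have AM: "A ^\<^sub>m \<beta> * M = M * ?B' ^\<^sub>m \<beta>"
    by (rule A_pow_M[OF M Minv A MM AB])
  have AMv: "A ^\<^sub>m \<beta> *\<^sub>v (M *\<^sub>v w) = M *\<^sub>v (?B' ^\<^sub>m \<beta> *\<^sub>v w)" if w: "w \<in> carrier_vec n" for w
  proof -
    have "A ^\<^sub>m \<beta> *\<^sub>v (M *\<^sub>v w) = (A ^\<^sub>m \<beta> * M) *\<^sub>v w"
      by (rule assoc_mult_mat_vec[symmetric]) (use A M w in auto)
    also have "\<dots> = (M * ?B' ^\<^sub>m \<beta>) *\<^sub>v w" unfolding AM ..
    also have "\<dots> = M *\<^sub>v (?B' ^\<^sub>m \<beta> *\<^sub>v w)"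
      by (rule assoc_mult_mat_vec) (use M B' w in auto)
    finally show ?thesis .
  qed
  define d where "d = M *\<^sub>v map_vec of_int e"
  have d: "d \<in> digit_set n M A \<beta>"
  proof -
    have lat: "d \<in> lattice n M" unfolding lattice_def d_def
      by (rule CollectI, rule exI[of _ "map_vec of_int e"]) (use e in auto)
    define f where "f = M *\<^sub>v vec n (\<lambda>i. of_real (r $ i))"
    have rb: "- 1 / 2 \<le> r $ i \<and> r $ i < 1 / 2" if i: "i < n" for i
    proof -
      have "real_of_int \<lfloor>y $ i + 1/2\<rfloor> \<le> y $ i + 1/2" by (rule of_int_floor_le)
      moreover have "y $ i + 1/2 < real_of_int \<lfloor>y $ i + 1/2\<rfloor> + 1" by linarith
      moreover have "r $ i = y $ i - real_of_int \<lfloor>y $ i + 1/2\<rfloor>" unfolding r_def q_def using i y by simp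
      ultimately show ?thesis by linarith
    qed
    have f: "f \<in> fund_dom n M" unfolding fund_dom_def f_def
      by (rule CollectI, rule exI[of _ "\<lambda>i. r $ i"]) (use rb in auto)
    have vr: "vec n (\<lambda>i. of_real (r $ i)) = (map_vec of_real r :: 'a vec)"
      using r by (intro eq_vecI) auto
    have "A ^\<^sub>m \<beta> *\<^sub>v f = M *\<^sub>v (?B' ^\<^sub>m \<beta> *\<^sub>v map_vec of_real r)"
      unfolding f_def vr using AMv r by simp
    also have "?B' ^\<^sub>m \<beta> *\<^sub>v map_vec of_real r = map_vec of_real (Bb *\<^sub>v r)"
      unfolding B'pow2 by (rule of_real_hom.mult_mat_vec_hom[OF Bb r, symmetric])
    also have "\<dots> = map_vec of_int e" unfolding ec[symmetric] using e by (intro eq_vecI) auto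
    finally have "A ^\<^sub>m \<beta> *\<^sub>v f = d" unfolding d_def .
    with f lat show ?thesis unfolding digit_set_def by blast
  qed
  have zeq: "z = e + Bi *\<^sub>v q" unfolding e_def using z Bi q by (intro eq_vecI) auto
  have "map_vec (of_int :: int \<Rightarrow> 'a) z = map_vec of_int e + map_vec of_int (Bi *\<^sub>v q)"
    unfolding zeq using e Bi q by (intro eq_vecI) auto
  also have "map_vec (of_int :: int \<Rightarrow> 'a) (Bi *\<^sub>v q) = ?B' ^\<^sub>m \<beta> *\<^sub>v map_vec of_int q"
    unfolding B'pow by (rule of_int_hom.mult_mat_vec_hom[OF Bi q])
  finally have mz: "map_vec (of_int :: int \<Rightarrow> 'a) z = map_vec of_int e + ?B' ^\<^sub>m \<beta> *\<^sub>v map_vec of_int q" .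
  have "M *\<^sub>v map_vec of_int z = d + M *\<^sub>v (?B' ^\<^sub>m \<beta> *\<^sub>v map_vec of_int q)"
    unfolding mz d_def using M e q B' by (subst mult_add_distrib_mat_vec[of _ n n]) (auto intro!: mult_mat_vec_carrier[of _ n n])
  also have "\<dots> = d + A ^\<^sub>m \<beta> *\<^sub>v (M *\<^sub>v map_vec of_int q)" using AMv q by simp
  finally show ?case using rep_step[OF M A IH d] by simp
qed

theorem mainTheorem11:
  fixes M A :: "'a::real_normed_field mat" and n :: nat
  assumes "M \<in> carrier_mat n n" and "invertible_mat M"
    and "dilation_matrix_for n M A"
  shows "\<exists>\<beta>::nat. \<beta> \<ge> 1 \<and>
    (\<forall>x \<in> lattice n M. \<exists>N::nat. \<exists>d :: nat \<Rightarrow> 'a vec.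
       (\<forall>j\<le>N. d j \<in> digit_set n M A \<beta>) \<and>
       x = vec n (\<lambda>i. \<Sum>j\<le>N. ((A ^\<^sub>m (\<beta> * j)) *\<^sub>v d j) $ i))"
proof -
  note M = assms(1)
  from assms(3) obtain Minv B where A: "A \<in> carrier_mat n n" and Minv: "Minv \<in> carrier_mat n n"
    and MiM: "Minv * M = 1\<^sub>m n" and MMi: "M * Minv = 1\<^sub>m n"
    and dil: "int_dilation_matrix n B" and AB: "Minv * A * M = map_mat of_int B"
    unfolding dilation_matrix_for_def by blast
  have B: "B \<in> carrier_mat n n" using dil unfolding int_dilation_matrix_def by auto
  from inv_real[OF dil] obtain Cr where Cr: "Cr \<in> carrier_mat n n"
    and BC: "map_mat real_of_int B * Cr = 1\<^sub>m n" and CB: "Cr * map_mat real_of_int B = 1\<^sub>m n" by blast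
  have "\<exists>\<beta>\<ge>1. \<forall>i j. i < n \<longrightarrow> j < n \<longrightarrow> \<bar>(Cr ^\<^sub>m \<beta>) $$ (i,j)\<bar> \<le> 1 / (4 * real n)"
  proof (cases "n = 0")
    case True then show ?thesis by (intro exI[of _ 1]) auto
  next
    case False then show ?thesis by (intro decay[OF dil Cr BC CB]) auto
  qed
  then obtain \<beta> where \<beta>: "\<beta> \<ge> 1"
    and small: "\<And>i j. i < n \<Longrightarrow> j < n \<Longrightarrow> \<bar>(Cr ^\<^sub>m \<beta>) $$ (i,j)\<bar> \<le> 1 / (4 * real n)" by blast
  have Br: "map_mat real_of_int B \<in> carrier_mat n n" using B by simp
  have BP: "map_mat real_of_int (B ^\<^sub>m \<beta>) * Cr ^\<^sub>m \<beta> = 1\<^sub>m n"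
    unfolding of_int_hom.mat_hom_pow[OF B] by (rule pow_inverse_mat[OF Br Cr BC CB])
  show ?thesis
  proof (rule exI[of _ \<beta>], intro conjI ballI \<beta>)
    fix x assume "x \<in> lattice n M"
    then obtain z where x: "x = M *\<^sub>v z" and z: "z \<in> carrier_vec n" and zI: "\<And>i. i < n \<Longrightarrow> z $ i \<in> \<int>"
      unfolding lattice_def by blast
    define zi where "zi = vec n (\<lambda>i. SOME k. z $ i = (of_int k :: 'a))"
    have zi: "zi \<in> carrier_vec n" unfolding zi_def by simp
    have zeq: "map_vec of_int zi = z"
    proof (rule eq_vecI)
      fix i assume "i < dim_vec z"
      hence i: "i < n" using z by simp
      from zI[OF i] obtain k where "z $ i = of_int k" by (auto elim: Ints_cases)
      hence "z $ i = of_int (SOME k. z $ i = (of_int k :: 'a))" by (rule someI)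
      thus "map_vec of_int zi $ i = z $ i" unfolding zi_def using i by simp
    qed (use z zi in simp)
    define m where "m = nat (\<Sum>k<n. \<bar>zi $ k\<bar>)"
    have zb: "\<forall>i<n. \<bar>zi $ i\<bar> \<le> int m"
    proof (intro allI impI)
      fix i assume i: "i < n"
      have "\<bar>zi $ i\<bar> \<le> (\<Sum>k<n. \<bar>zi $ k\<bar>)"
        by (rule member_le_sum[of i "{..<n}" "\<lambda>k. \<bar>zi $ k\<bar>"]) (use i in auto)
      thus "\<bar>zi $ i\<bar> \<le> int m" unfolding m_def by simp
    qed
    have Cp: "Cr ^\<^sub>m \<beta> \<in> carrier_mat n n" using Cr by simp
    have "rep n M A \<beta> (M *\<^sub>v map_vec of_int zi)"
      by (rule core[OF M Minv A MMi AB B Cp BP small zi zb])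
    hence "rep n M A \<beta> x" unfolding x zeq .
    thus "\<exists>N d. (\<forall>j\<le>N. d j \<in> digit_set n M A \<beta>) \<and>
       x = vec n (\<lambda>i. \<Sum>j\<le>N. ((A ^\<^sub>m (\<beta> * j)) *\<^sub>v d j) $ i)"
      unfolding rep_def .
  qed
qed

end
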